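(* Let $\Gamma=(V,E)$ be a simple, acyclic, modular directed graph and let $F\subseteq E$ be a complete connected set of edges. Let $u,v\in V(F)$ be such that there is no directed path in $\Gamma(F)$ from $u$ to $v$. Then (1) there exists an edge $f\in F$ with $t(f)=v$, and (2) there exists an edge $e\in F$ with $h(e)=u$.
   Context: Each edge $e$ has tail $t(e)$ and head $h(e)$; simple means edges with the same tail and head coincide; acyclic means no directed path of positive length from a vertex to itself. A directed path is $e_1,\dots,e_k$ with $t(e_{i+1})=h(e_i)$; a vertex is joined to itself by the path of length $0$. $\Gamma$ is modular if for any two distinct edges $e_1,e_2$ with a common tail there exist edges $f_1,f_2$ with a common head and $h(e_i)=t(f_i)$, and for any two distinct edges $h_1,h_2$ with a common head there exist edges $g_1,g_2$ with a common tail and $h(g_i)=t(h_i)$. D-operation: from distinct edges $e_1,e_2$ with a common tail, any pair $f_1,f_2$ with a common head and $h(e_i)=t(f_i)$ is obtained; U-operation: from distinct edges $f_1',f_2'$ with a common head, any pair $e_1',e_2'$ with a common tail and $h(e_i')=t(f_i')$ is obtained. $F$ is complete if all results of D- and U-operations applied to edges of $F$ lie in $F$. $V(F)$ is the set of heads and tails of edges of $F$, and $\Gamma(F)$ is the subgraph with vertex set $V(F)$ and edge set $F$. $F$ is connected if the undirected graph underlying $\Gamma(F)$ is connected. *)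

theory Defs
  imports Main
begin

text \<open>A simple directed graph is given by a vertex set V and an edge set
E \<subseteq> V \<times> V; an edge e is the pair (t e, h e), i.e. tail = fst, head = snd.
Simplicity (edges with same tail and head coincide) is built into this encoding.\<close>

definition tl_e :: "'a \<times> 'a \<Rightarrow> 'a" where "tl_e e = fst e"
definition hd_e :: "'a \<times> 'a \<Rightarrow> 'a" where "hd_e e = snd e"

definition modular :: "('a \<times> 'a) set \<Rightarrow> bool" where
  "modular E \<longleftrightarrow>
     (\<forall>e1\<in>E. \<forall>e2\<in>E. e1 \<noteq> e2 \<and> tl_e e1 = tl_e e2 \<longrightarrow>
        (\<exists>f1\<in>E. \<exists>f2\<in>E. hd_e f1 = hd_e f2 \<and> hd_e e1 = tl_e f1 \<and> hd_e e2 = tl_e f2)) \<and>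
     (\<forall>h1\<in>E. \<forall>h2\<in>E. h1 \<noteq> h2 \<and> hd_e h1 = hd_e h2 \<longrightarrow>
        (\<exists>g1\<in>E. \<exists>g2\<in>E. tl_e g1 = tl_e g2 \<and> hd_e g1 = tl_e h1 \<and> hd_e g2 = tl_e h2))"

definition complete_edges :: "('a \<times> 'a) set \<Rightarrow> ('a \<times> 'a) set \<Rightarrow> bool" where
  "complete_edges E F \<longleftrightarrow>
     (\<forall>e1\<in>F. \<forall>e2\<in>F. e1 \<noteq> e2 \<and> tl_e e1 = tl_e e2 \<longrightarrow>
        (\<forall>f1\<in>E. \<forall>f2\<in>E. hd_e f1 = hd_e f2 \<and> hd_e e1 = tl_e f1 \<and> hd_e e2 = tl_e f2
            \<longrightarrow> f1 \<in> F \<and> f2 \<in> F)) \<and>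
     (\<forall>f1\<in>F. \<forall>f2\<in>F. f1 \<noteq> f2 \<and> hd_e f1 = hd_e f2 \<longrightarrow>
        (\<forall>e1\<in>E. \<forall>e2\<in>E. tl_e e1 = tl_e e2 \<and> hd_e e1 = tl_e f1 \<and> hd_e e2 = tl_e f2
            \<longrightarrow> e1 \<in> F \<and> e2 \<in> F))"

definition VF :: "('a \<times> 'a) set \<Rightarrow> 'a set" where
  "VF F = tl_e ` F \<union> hd_e ` F"

definition connected_edges :: "('a \<times> 'a) set \<Rightarrow> bool" where
  "connected_edges F \<longleftrightarrow> (\<forall>x\<in>VF F. \<forall>y\<in>VF F. (x, y) \<in> (F \<union> F\<inverse>)\<^sup>*)"

definition dpath :: "('a \<times> 'a) set \<Rightarrow> 'a \<Rightarrow> 'a \<Rightarrow> bool" where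
  "dpath F u v \<longleftrightarrow> (u, v) \<in> F\<^sup>*"

end

theory Submission
  imports Defs
begin

lemma sinkA:
  assumes "modular E" "F \<subseteq> E" "complete_edges E F" "\<forall>f\<in>F. fst f \<noteq> v"
  shows "(a, v) \<in> F ^^ n \<Longrightarrow> (a, b) \<in> F \<Longrightarrow> (b, v) \<in> F\<^sup>*"
proof (induction n arbitrary: a b)
  case 0
  then show ?case using assms(4) by auto
next
  case (Suc m)
  from relpow_Suc_D2[OF Suc.prems(1)] obtain y where ay: "(a, y) \<in> F" and yv: "(y, v) \<in> F ^^ m" by blast
  show ?case
  proof (cases "y = b")
    case True then show ?thesis using yv relpow_imp_rtrancl by blast
  next
    case False
    have "(a,b) \<noteq> (a,y)" using False by auto
    have M: "\<forall>e1\<in>E. \<forall>e2\<in>E. e1 \<noteq> e2 \<and> fst e1 = fst e2 \<longrightarrow>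
        (\<exists>f1\<in>E. \<exists>f2\<in>E. snd f1 = snd f2 \<and> snd e1 = fst f1 \<and> snd e2 = fst f2)"
      using assms(1) unfolding modular_def tl_e_def hd_e_def by blast
    have C: "\<forall>e1\<in>F. \<forall>e2\<in>F. e1 \<noteq> e2 \<and> fst e1 = fst e2 \<longrightarrow>
        (\<forall>f1\<in>E. \<forall>f2\<in>E. snd f1 = snd f2 \<and> snd e1 = fst f1 \<and> snd e2 = fst f2
            \<longrightarrow> f1 \<in> F \<and> f2 \<in> F)"
      using assms(3) unfolding complete_edges_def tl_e_def hd_e_def by blast
    have abE: "(a,b) \<in> E" "(a,y) \<in> E" using assms(2) Suc.prems(2) ay by auto
    obtain f1 f2 where f: "f1 \<in> E" "f2 \<in> E" "snd f1 = snd f2" "b = fst f1" "y = fst f2"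
      using M abE \<open>(a,b) \<noteq> (a,y)\<close> by fastforce
    have "f1 \<in> F \<and> f2 \<in> F"
      using C Suc.prems(2) ay f \<open>(a,b) \<noteq> (a,y)\<close> by fastforce
    then have bz: "(b, snd f1) \<in> F" and yz: "(y, snd f1) \<in> F" using f by (metis prod.collapse)+
    have "(snd f1, v) \<in> F\<^sup>*" using Suc.IH[OF yv yz] .
    then show ?thesis using bz by auto
  qed
qed

lemma sourceB:
  assumes "modular E" "F \<subseteq> E" "complete_edges E F" "\<forall>f\<in>F. snd f \<noteq> u"
  shows "(u, a) \<in> F ^^ n \<Longrightarrow> (b, a) \<in> F \<Longrightarrow> (u, b) \<in> F\<^sup>*"
proof (induction n arbitrary: a b)
  case 0
  then show ?case using assms(4) by auto
next
  case (Suc m)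
  from Suc.prems(1) obtain y where ay: "(y, a) \<in> F" and yv: "(u, y) \<in> F ^^ m" by auto
  show ?case
  proof (cases "y = b")
    case True then show ?thesis using yv relpow_imp_rtrancl by blast
  next
    case False
    have "(b,a) \<noteq> (y,a)" using False by auto
    have M: "\<forall>h1\<in>E. \<forall>h2\<in>E. h1 \<noteq> h2 \<and> snd h1 = snd h2 \<longrightarrow>
        (\<exists>g1\<in>E. \<exists>g2\<in>E. fst g1 = fst g2 \<and> snd g1 = fst h1 \<and> snd g2 = fst h2)"
      using assms(1) unfolding modular_def tl_e_def hd_e_def by blast
    have C: "\<forall>f1\<in>F. \<forall>f2\<in>F. f1 \<noteq> f2 \<and> snd f1 = snd f2 \<longrightarrow>
        (\<forall>e1\<in>E. \<forall>e2\<in>E. fst e1 = fst e2 \<and> snd e1 = fst f1 \<and> snd e2 = fst f2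
            \<longrightarrow> e1 \<in> F \<and> e2 \<in> F)"
      using assms(3) unfolding complete_edges_def tl_e_def hd_e_def by blast
    have abE: "(b,a) \<in> E" "(y,a) \<in> E" using assms(2) Suc.prems(2) ay by auto
    obtain f1 f2 where f: "f1 \<in> E" "f2 \<in> E" "fst f1 = fst f2" "snd f1 = b" "snd f2 = y"
      using M abE \<open>(b,a) \<noteq> (y,a)\<close> by fastforce
    have "f1 \<in> F \<and> f2 \<in> F"
      using C Suc.prems(2) ay f \<open>(b,a) \<noteq> (y,a)\<close> by fastforce
    then have bz: "(fst f1, b) \<in> F" and yz: "(fst f1, y) \<in> F" using f by (metis prod.collapse)+
    have "(u, fst f1) \<in> F\<^sup>*" using Suc.IH[OF yv yz] .
    then show ?thesis using bz by auto
  qed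
qed

theorem lemma3p2p5:
  fixes V :: "'a set" and E F :: "('a \<times> 'a) set" and u v :: 'a
  assumes "E \<subseteq> V \<times> V"
    and "acyclic E"
    and "modular E"
    and "F \<subseteq> E"
    and "complete_edges E F"
    and "connected_edges F"
    and "u \<in> VF F" and "v \<in> VF F"
    and "\<not> dpath F u v"
  shows "(\<exists>f\<in>F. tl_e f = v) \<and> (\<exists>e\<in>F. hd_e e = u)"
proof -
  have conn: "(u, v) \<in> (F \<union> F\<inverse>)\<^sup>*" using assms(6,7,8) unfolding connected_edges_def by blast
  have 1: "\<exists>f\<in>F. tl_e f = v"
  proof (rule ccontr)
    assume "\<not> ?thesis"
    then have s: "\<forall>f\<in>F. fst f \<noteq> v" unfolding tl_e_def by auto
    have "(u, v) \<in> F\<^sup>*" using conn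
    proof (induction rule: converse_rtrancl_induct)
      case base then show ?case by simp
    next
      case (step x y)
      show ?case
      proof (cases "(x, y) \<in> F")
        case True then show ?thesis using step by auto
      next
        case False
        then have "(y, x) \<in> F" using step by auto
        moreover obtain n where "(y, v) \<in> F ^^ n" using step rtrancl_power by blast
        ultimately show ?thesis using sinkA[OF assms(3,4,5) s] by blast
      qed
    qed
    then show False using assms(9) unfolding dpath_def by simp
  qed
  have 2: "\<exists>e\<in>F. hd_e e = u"
  proof (rule ccontr)
    assume "\<not> ?thesis"
    then have s: "\<forall>f\<in>F. snd f \<noteq> u" unfolding hd_e_def by auto
    have "(u, v) \<in> F\<^sup>*" using conn
    proof (induction rule: rtrancl_induct)
      case base then show ?case by simp
    next
      case (step y z)
      show ?case
      proof (cases "(y, z) \<in> F")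
        case True then show ?thesis using step by auto
      next
        case False
        then have "(z, y) \<in> F" using step by auto
        moreover obtain n where "(u, y) \<in> F ^^ n" using step rtrancl_power by blast
        ultimately show ?thesis using sourceB[OF assms(3,4,5) s] by blast
      qed
    qed
    then show False using assms(9) unfolding dpath_def by simp
  qed
  show ?thesis using 1 2 by blast
qed

end
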